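(* For every positive integer $n$, $$p_{\mathbf 1,\mathbf 0,\binom{n+1}{2}}=\frac{\binom{n+1}{2}!\cdot\bigl(1!\cdot2!\cdots(n-1)!\bigr)}{1!\cdot3!\cdots(2n-1)!}.$$
   Context: $\mathbf 1=(1,\dots,1)\in\mathbb N^n$, so $\lambda(\mathbf 1)=(n,n-1,\dots,1)=\delta_n$, the staircase, with $\binom{n+1}{2}$ cells. $p_{\mathbf 1,\mathbf 0,\binom{n+1}{2}}$ is the number of vertex plane partitions of shape $\delta_n$ whose entries are exactly the distinct numbers $0,1,\dots,\binom{n+1}{2}-1$. A plane partition of shape $\delta_n$ is a filling by nonnegative integers weakly decreasing along rows and down columns; with $\pi_{i,j}$ the entry in row $i$, column $j$ (column $j$ has rows $1,\dots,n+1-j$), it is a vertex plane partition if for every $1\le j\le n-1$: whenever $\pi_{i,j}=\pi_{i,j+1}$ for some $2\le i\le n-j$, then $\pi_{i-1,j}=\pi_{i-1,j+1}$; and for every $1\le i\le n-j$, either $\pi_{i,j+1}<\pi_{i+1,j}$ or $\pi_{i,j+1}=\pi_{i,j}$. *)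

theory Defs
  imports Complex_Main
begin

definition stair_cell :: "nat \<Rightarrow> nat \<Rightarrow> nat \<Rightarrow> bool" where
  "stair_cell n i j \<longleftrightarrow> 1 \<le> i \<and> 1 \<le> j \<and> i + j \<le> n + 1"

text \<open>The filling is a function
  on N x N; values outside the shape are irrelevant (fixed to 0 below).\<close>
definition stair_plane_partition :: "nat \<Rightarrow> (nat \<Rightarrow> nat \<Rightarrow> nat) \<Rightarrow> bool" where
  "stair_plane_partition n \<pi> \<longleftrightarrow>
     (\<forall>i j. stair_cell n i j \<and> stair_cell n i (j + 1) \<longrightarrow> \<pi> i (j + 1) \<le> \<pi> i j) \<and>
     (\<forall>i j. stair_cell n i j \<and> stair_cell n (i + 1) j \<longrightarrow> \<pi> (i + 1) j \<le> \<pi> i j)"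

definition stair_vertex_pp :: "nat \<Rightarrow> (nat \<Rightarrow> nat \<Rightarrow> nat) \<Rightarrow> bool" where
  "stair_vertex_pp n \<pi> \<longleftrightarrow> stair_plane_partition n \<pi> \<and>
     (\<forall>j. 1 \<le> j \<and> j \<le> n - 1 \<longrightarrow>
        (\<forall>i. 2 \<le> i \<and> i \<le> n - j \<and> \<pi> i j = \<pi> i (j + 1) \<longrightarrow> \<pi> (i - 1) j = \<pi> (i - 1) (j + 1)) \<and>
        (\<forall>i. 1 \<le> i \<and> i \<le> n - j \<longrightarrow> \<pi> i (j + 1) < \<pi> (i + 1) j \<or> \<pi> i (j + 1) = \<pi> i j))"

text \<open>p_{1,0,binom(n+1,2)}: number of vertex plane partitions of shape delta_n whose
  entries are exactly the distinct numbers 0, ..., binom(n+1,2) - 1.\<close>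
definition p_stair :: "nat \<Rightarrow> nat" where
  "p_stair n = card {\<pi>. (\<forall>i j. \<not> stair_cell n i j \<longrightarrow> \<pi> i j = 0) \<and>
       stair_vertex_pp n \<pi> \<and>
       bij_betw (\<lambda>(i, j). \<pi> i j) {(i, j). stair_cell n i j} {0..<(n + 1) choose 2}}"

end

theory Submission
  imports Defs "HOL-Computational_Algebra.Polynomial"
begin

lemma coeff_lin_mult_Suc: "coeff ([:-c,1:] * p) (Suc d) = coeff p d - c * coeff p (Suc d)" for c :: real
  by (simp add: algebra_simps)
lemma coeff_lin_mult_0: "coeff ([:-c,1:] * p) 0 = - c * coeff p 0" for c :: real
  by simp

lemma prod_lin_coeffs:
  fixes c :: "nat \<Rightarrow> real"
  assumes "finite F"
  shows "(\<forall>i>card F. coeff (\<Prod>k\<in>F. [:-c k,1:]) i = 0) \<and> coeff (\<Prod>k\<in>F. [:-c k,1:]) (card F) = 1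
     \<and> (F \<noteq> {} \<longrightarrow> coeff (\<Prod>k\<in>F. [:-c k,1:]) (card F - 1) = - (\<Sum>k\<in>F. c k))"
  using assms
proof (induction F rule: finite_induct)
  case empty
  then show ?case by (auto simp: coeff_1)
next
  case (insert x F)
  define p where "p = (\<Prod>k\<in>F. [:-c k,1:])"
  have e: "(\<Prod>k\<in>insert x F. [:-c k,1:]) = [:-c x,1:] * p"
    using insert by (simp add: p_def)
  have cF: "card (insert x F) = Suc (card F)" using insert by simp
  have IH: "(\<forall>i>card F. coeff p i = 0)" "coeff p (card F) = 1"
    "F \<noteq> {} \<Longrightarrow> coeff p (card F - 1) = - (\<Sum>k\<in>F. c k)"
    using insert.IH by (auto simp: p_def)
  have A: "\<forall>i>card (insert x F). coeff ([:-c x,1:] * p) i = 0"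
  proof (intro allI impI)
    fix i assume "card (insert x F) < i"
    then obtain d where "i = Suc d" "d > card F" using cF by (cases i) auto
    then show "coeff ([:-c x,1:] * p) i = 0" using IH(1) by (simp del: mult_pCons_left add: coeff_lin_mult_Suc)
  qed
  have B: "coeff ([:-c x,1:] * p) (card (insert x F)) = 1"
    using IH(1,2) cF by (simp del: mult_pCons_left add: coeff_lin_mult_Suc)
  have C: "coeff ([:-c x,1:] * p) (card (insert x F) - 1) = - (\<Sum>k\<in>insert x F. c k)"
  proof (cases "F = {}")
    case True
    then have "p = 1" by (simp add: p_def)
    then show ?thesis using True by simp
  next
    case False
    then have "card F > 0" using insert by auto
    then obtain d where d: "card F = Suc d" by (cases "card F") auto
    have "coeff ([:-c x,1:] * p) (card (insert x F) - 1) = coeff p d - c x * coeff p (Suc d)"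
      using cF d by (simp del: mult_pCons_left add: coeff_lin_mult_Suc)
    also have "\<dots> = - (\<Sum>k\<in>F. c k) - c x" using IH(2,3) False d by simp
    finally show ?thesis using insert by simp
  qed
  show ?case using A B C e by simp
qed

lemma lagrange_sum:
  fixes a b :: "nat \<Rightarrow> real"
  assumes fin: "finite P" and inj: "inj_on a P"
  shows "(\<Sum>j\<in>P. (\<Prod>k\<in>P. a j - b k) / (\<Prod>k\<in>P-{j}. a j - a k)) = (\<Sum>k\<in>P. a k - b k)"
proof (cases "P = {}")
  case True then show ?thesis by simp
next
  case ne: False
  define m where "m = card P"
  have m0: "m > 0" using ne fin by (simp add: m_def card_gt_0_iff)
  define Pb where "Pb = (\<Prod>k\<in>P. [:-b k,1:])"
  define Pa where "Pa = (\<Prod>k\<in>P. [:-a k,1:])"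
  define L where "L j = (\<Prod>k\<in>P-{j}. [:-a k,1:])" for j
  define c where "c j = (\<Prod>k\<in>P. a j - b k) / (\<Prod>k\<in>P-{j}. a j - a k)" for j
  define q where "q = Pa + (\<Sum>j\<in>P. smult (c j) (L j))"
  have cPb: "(\<forall>i>m. coeff Pb i = 0)" "coeff Pb m = 1" "coeff Pb (m - 1) = - (\<Sum>k\<in>P. b k)"
    using prod_lin_coeffs[OF fin, of b] ne by (auto simp: Pb_def m_def)
  have cPa: "(\<forall>i>m. coeff Pa i = 0)" "coeff Pa m = 1" "coeff Pa (m - 1) = - (\<Sum>k\<in>P. a k)"
    using prod_lin_coeffs[OF fin, of a] ne by (auto simp: Pa_def m_def)
  have cardL: "j \<in> P \<Longrightarrow> card (P - {j}) = m - 1" for j using fin by (simp add: m_def)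
  have cL: "j \<in> P \<Longrightarrow> (\<forall>i>m-1. coeff (L j) i = 0) \<and> coeff (L j) (m-1) = 1" for j
    using prod_lin_coeffs[of "P-{j}" a] fin cardL[of j] by (auto simp: L_def)
  have polyL: "poly (L j) x = (\<Prod>k\<in>P-{j}. x - a k)" for j x
    by (simp add: L_def poly_prod)
  have L0: "i \<in> P \<Longrightarrow> j \<in> P \<Longrightarrow> i \<noteq> j \<Longrightarrow> poly (L j) (a i) = 0" for i j
    unfolding polyL using fin by (intro prod_zero) auto
  have polyPa: "i \<in> P \<Longrightarrow> poly Pa (a i) = 0" for i
    unfolding Pa_def poly_prod using fin by (intro prod_zero) auto
  have Lnz: "i \<in> P \<Longrightarrow> (\<Prod>k\<in>P-{i}. a i - a k) \<noteq> 0" for i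
    using fin inj by (subst prod_zero_iff) (auto dest: inj_onD)
  have agree: "poly Pb z = poly q z" if z: "z \<in> a ` P" for z
  proof -
    obtain i where i: "i \<in> P" "z = a i" using z by auto
    have "poly q z = (\<Sum>j\<in>P. c j * poly (L j) (a i))"
      using i polyPa by (simp add: q_def poly_sum)
    also have "\<dots> = c i * poly (L i) (a i)"
      using fin i L0 by (subst sum.remove[of _ i]) auto
    also have "\<dots> = (\<Prod>k\<in>P. a i - b k)"
      using Lnz[OF i(1)] by (simp add: c_def polyL)
    also have "\<dots> = poly Pb z" using i by (simp add: Pb_def poly_prod)
    finally show ?thesis by simp
  qed
  have coeff_q: "coeff q i = coeff Pa i + (\<Sum>j\<in>P. c j * coeff (L j) i)" for i
    by (simp add: q_def coeff_sum)
  have degPb: "degree Pb \<le> m" using cPb by (intro degree_le) auto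
  have degq: "degree q \<le> m"
  proof (intro degree_le allI impI)
    fix i assume "m < i"
    then show "coeff q i = 0" using cPa cL by (simp add: coeff_q)
  qed
  have cqm: "coeff q m = 1"
    using cPa cL m0 by (simp add: coeff_q)
  have cardA: "card (a ` P) \<ge> m" using inj by (simp add: card_image m_def)
  have "Pb = q"
    by (rule poly_eqI_degree_lead_coeff[OF _ cardA degPb degq agree]) (use cPb cqm in auto)
  then have "coeff Pb (m-1) = coeff q (m-1)" by simp
  then have "- (\<Sum>k\<in>P. b k) = - (\<Sum>k\<in>P. a k) + (\<Sum>j\<in>P. c j)"
    using cPb cPa cL by (simp add: coeff_q)
  then show ?thesis by (simp add: c_def sum_subtractf)
qed

definition rr :: "real \<Rightarrow> real \<Rightarrow> real" where
  "rr u v = ((u - 1 - v) * (u + v)) / ((u - 1 + v) * (u - v))"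

lemma ident:
  fixes x :: "nat \<Rightarrow> real"
  assumes fin: "finite P" and ge: "\<And>k. k \<in> P \<Longrightarrow> x k \<ge> 1" and inj: "inj_on x P"
  shows "(\<Sum>j\<in>P. x j * (\<Prod>k\<in>P-{j}. rr (x j) (x k))) = (\<Sum>j\<in>P. x j)"
proof -
  define a where "a k = x k * (x k - 1)" for k
  define b where "b k = x k * (x k + 1)" for k
  have inja: "inj_on a P"
  proof (rule inj_onI)
    fix i j assume ij: "i \<in> P" "j \<in> P" "a i = a j"
    have "(x i - x j) * (x i + x j - 1) = 0" using ij(3) by (simp add: a_def algebra_simps)
    moreover have "x i + x j - 1 > 0" using ge[OF ij(1)] ge[OF ij(2)] by linarith
    ultimately have "x i = x j" by simp
    then show "i = j" using inj ij by (auto dest: inj_onD)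
  qed
  have L: "(\<Sum>j\<in>P. (\<Prod>k\<in>P. a j - b k) / (\<Prod>k\<in>P-{j}. a j - a k)) = (\<Sum>k\<in>P. a k - b k)"
    by (rule lagrange_sum[OF fin inja])
  have rre: "rr (x j) (x k) = (a j - b k) / (a j - a k)" for j k
    by (simp add: rr_def a_def b_def algebra_simps)
  have trm: "x j * (\<Prod>k\<in>P-{j}. rr (x j) (x k)) = - (1/2) * ((\<Prod>k\<in>P. a j - b k) / (\<Prod>k\<in>P-{j}. a j - a k))"
    if j: "j \<in> P" for j
  proof -
    have "(\<Prod>k\<in>P. a j - b k) = (a j - b j) * (\<Prod>k\<in>P-{j}. a j - b k)"
      using fin j by (simp add: prod.remove)
    moreover have "a j - b j = - 2 * x j" by (simp add: a_def b_def algebra_simps)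
    moreover have "(\<Prod>k\<in>P-{j}. rr (x j) (x k)) = (\<Prod>k\<in>P-{j}. a j - b k) / (\<Prod>k\<in>P-{j}. a j - a k)"
      by (simp add: rre prod_dividef)
    ultimately show ?thesis by simp
  qed
  have "(\<Sum>j\<in>P. x j * (\<Prod>k\<in>P-{j}. rr (x j) (x k))) = - (1/2) * (\<Sum>k\<in>P. a k - b k)"
  proof -
    have "(\<Sum>j\<in>P. x j * (\<Prod>k\<in>P-{j}. rr (x j) (x k))) = (\<Sum>j\<in>P. - (1/2) * ((\<Prod>k\<in>P. a j - b k) / (\<Prod>k\<in>P-{j}. a j - a k)))"
      using trm by (intro sum.cong) auto
    also have "\<dots> = - (1/2) * (\<Sum>j\<in>P. (\<Prod>k\<in>P. a j - b k) / (\<Prod>k\<in>P-{j}. a j - a k))"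
      by (simp only: sum_distrib_left)
    finally show ?thesis using L by simp
  qed
  also have "\<dots> = (\<Sum>j\<in>P. x j)"
    by (simp add: a_def b_def sum_distrib_left algebra_simps sum_subtractf flip: sum_negf)
  finally show ?thesis .
qed

definition LE :: "(nat \<times> nat) set \<Rightarrow> (nat \<times> nat \<Rightarrow> nat \<times> nat \<Rightarrow> bool) \<Rightarrow> (nat \<Rightarrow> nat \<Rightarrow> nat) set" where
  "LE S R = {f. (\<forall>i j. (i, j) \<notin> S \<longrightarrow> f i j = 0) \<and>
      (\<forall>x\<in>S. \<forall>y\<in>S. R x y \<longrightarrow> case_prod f x < case_prod f y) \<and>
      bij_betw (case_prod f) S {0..<card S}}"

lemma LE_finite:
  assumes "finite S"
  shows "finite (LE S R)"
proof -
  let ?G = "{g. \<forall>x. (x \<in> S \<longrightarrow> g x \<in> {0..<card S}) \<and> (x \<notin> S \<longrightarrow> g x = (0::nat))}"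
  have "finite ?G" using assms by (intro finite_set_of_finite_funs) auto
  moreover have "LE S R \<subseteq> curry ` ?G"
  proof
    fix f assume f: "f \<in> LE S R"
    have "case_prod f \<in> ?G"
      using f unfolding LE_def bij_betw_def by auto
    moreover have "f = curry (case_prod f)" by simp
    ultimately show "f \<in> curry ` ?G" by blast
  qed
  ultimately show ?thesis using finite_subset by blast
qed

lemma LE_empty: "LE {} R = {\<lambda>i j. 0}"
  unfolding LE_def by (auto simp: bij_betw_def)

lemma LE_piece:
  assumes fin: "finite S" and xS: "x \<in> S" and xmin: "\<forall>y\<in>S. \<not> R y x"
  shows "card {f \<in> LE S R. f (fst x) (snd x) = 0} = card (LE (S - {x}) R)"
proof -
  define N where "N = card S"
  have N1: "N \<ge> 1" using fin xS by (simp add: N_def Suc_le_eq card_gt_0_iff) blast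
  have cS': "card (S - {x}) = N - 1" using fin xS by (simp add: N_def)
  define \<phi> where "\<phi> f = (\<lambda>i j. f i j - (1::nat))" for f :: "nat \<Rightarrow> nat \<Rightarrow> nat"
  define \<psi> where "\<psi> g = (\<lambda>i j. if (i, j) \<in> S \<and> (i, j) \<noteq> x then g i j + 1 else (0::nat))" for g :: "nat \<Rightarrow> nat \<Rightarrow> nat"
  let ?A = "{f \<in> LE S R. f (fst x) (snd x) = 0}"
  let ?B = "LE (S - {x}) R"
  have pos: "f i j \<ge> 1" if f: "f \<in> ?A" and ij: "(i, j) \<in> S" "(i, j) \<noteq> x" for f i j
  proof (rule ccontr)
    assume "\<not> f i j \<ge> 1"
    then have "case_prod f (i, j) = case_prod f x" using f by (cases x) auto
    moreover have "inj_on (case_prod f) S" using f by (auto simp: LE_def bij_betw_def)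
    ultimately have "(i, j) = x" using ij xS by (meson inj_onD)
    then show False using ij by simp
  qed
  have "bij_betw \<phi> ?A ?B"
  proof (rule bij_betw_byWitness[where f' = \<psi>])
    show "\<forall>f\<in>?A. \<psi> (\<phi> f) = f"
    proof
      fix f assume f: "f \<in> ?A"
      show "\<psi> (\<phi> f) = f"
      proof (intro ext)
        fix i j
        show "\<psi> (\<phi> f) i j = f i j"
          using pos[OF f, of i j] f by (cases x) (auto simp: \<psi>_def \<phi>_def LE_def)
      qed
    qed
    show "\<forall>g\<in>?B. \<phi> (\<psi> g) = g"
    proof
      fix g assume g: "g \<in> ?B"
      show "\<phi> (\<psi> g) = g"
      proof (intro ext)
        fix i j
        show "\<phi> (\<psi> g) i j = g i j"
          using g by (auto simp: \<psi>_def \<phi>_def LE_def)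
      qed
    qed
    show "\<phi> ` ?A \<subseteq> ?B"
    proof
      fix h assume "h \<in> \<phi> ` ?A"
      then obtain f where f: "f \<in> ?A" and h: "h = \<phi> f" by blast
      have z: "(i, j) \<notin> S - {x} \<Longrightarrow> h i j = 0" for i j
        using f by (cases x) (auto simp: h \<phi>_def LE_def)
      have r: "\<forall>a\<in>S - {x}. \<forall>b\<in>S - {x}. R a b \<longrightarrow> case_prod h a < case_prod h b"
      proof (intro ballI impI)
        fix a b assume ab: "a \<in> S - {x}" "b \<in> S - {x}" "R a b"
        have "case_prod f a < case_prod f b" using f ab by (auto simp: LE_def)
        moreover have "case_prod f a \<ge> 1" using pos[OF f, of "fst a" "snd a"] ab by (cases a) auto
        ultimately show "case_prod h a < case_prod h b"
          by (cases a, cases b) (auto simp: h \<phi>_def)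
      qed
      have bf: "bij_betw (case_prod f) S {0..<N}" using f by (simp add: LE_def N_def)
      have "bij_betw (case_prod f) (S - {x}) ({0..<N} - {0})"
      proof (rule bij_betw_DiffI[OF bf])
        show "bij_betw (case_prod f) {x} {0}" using f by (cases x) (auto simp: bij_betw_def)
      qed (use xS N1 in auto)
      moreover have "bij_betw (\<lambda>v. v - 1) ({0..<N} - {0}) {0..<N - 1}"
      proof (rule bij_betw_byWitness[where f' = Suc])
      qed auto
      ultimately have "bij_betw ((\<lambda>v. v - 1) \<circ> case_prod f) (S - {x}) {0..<N - 1}"
        by (rule bij_betw_trans)
      moreover have "(\<lambda>v. v - 1) \<circ> case_prod f = case_prod h"
        by (auto simp: h \<phi>_def)
      ultimately have "bij_betw (case_prod h) (S - {x}) {0..<card (S - {x})}"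
        by (simp add: cS')
      then show "h \<in> ?B" using z r by (auto simp: LE_def)
    qed
    show "\<psi> ` ?B \<subseteq> ?A"
    proof
      fix h assume "h \<in> \<psi> ` ?B"
      then obtain g where g: "g \<in> ?B" and h: "h = \<psi> g" by blast
      have hx: "h (fst x) (snd x) = 0" by (simp add: h \<psi>_def)
      have z: "(i, j) \<notin> S \<Longrightarrow> h i j = 0" for i j by (simp add: h \<psi>_def)
      have r: "\<forall>a\<in>S. \<forall>b\<in>S. R a b \<longrightarrow> case_prod h a < case_prod h b"
      proof (intro ballI impI)
        fix a b assume ab: "a \<in> S" "b \<in> S" "R a b"
        have bx: "b \<noteq> x" using xmin ab by auto
        show "case_prod h a < case_prod h b"
        proof (cases "a = x")
          case True then show ?thesis using bx ab by (cases a, cases b) (auto simp: h \<psi>_def)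
        next
          case False
          then have "case_prod g a < case_prod g b" using g ab bx by (auto simp: LE_def)
          then show ?thesis using False bx ab by (cases a, cases b) (auto simp: h \<psi>_def)
        qed
      qed
      have bg: "bij_betw (case_prod g) (S - {x}) {0..<N - 1}" using g by (simp add: LE_def cS')
      have hS: "case_prod h p = (if p = x then 0 else Suc (case_prod g p))" if "p \<in> S" for p
        using that by (cases p) (auto simp: h \<psi>_def)
      have inj: "inj_on (case_prod h) S"
      proof (rule inj_onI)
        fix p q assume pq: "p \<in> S" "q \<in> S" "case_prod h p = case_prod h q"
        show "p = q"
        proof (cases "p = x \<or> q = x")
          case True then show ?thesis using pq hS[of p] hS[of q] by (auto split: if_splits)
        next
          case False
          then have "case_prod g p = case_prod g q" using pq hS[of p] hS[of q] by auto
          then show ?thesis using bg pq False by (auto simp: bij_betw_def dest: inj_onD)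
        qed
      qed
      have img: "case_prod h ` S = {0..<N}"
      proof
        show "case_prod h ` S \<subseteq> {0..<N}"
        proof
          fix v assume "v \<in> case_prod h ` S"
          then obtain p where p: "p \<in> S" "v = case_prod h p" by blast
          show "v \<in> {0..<N}"
          proof (cases "p = x")
            case True then show ?thesis using p hS N1 by auto
          next
            case False
            then have "case_prod g p < N - 1" using bg p by (auto simp: bij_betw_def)
            then show ?thesis using p hS False by auto
          qed
        qed
        show "{0..<N} \<subseteq> case_prod h ` S"
        proof
          fix v assume v: "v \<in> {0..<N}"
          show "v \<in> case_prod h ` S"
          proof (cases v)
            case 0 then show ?thesis using hS[OF xS] xS by force
          next
            case (Suc w)
            then have "w \<in> {0..<N - 1}" using v by auto
            then have "w \<in> case_prod g ` (S - {x})" using bg by (simp add: bij_betw_def)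
            then obtain p where p: "p \<in> S - {x}" "case_prod g p = w" by blast
            then have "case_prod h p = v" using hS[of p] Suc by auto
            then show ?thesis using p by force
          qed
        qed
      qed
      have "bij_betw (case_prod h) S {0..<card S}" using inj img by (simp add: bij_betw_def N_def)
      then show "h \<in> ?A" using hx z r by (auto simp: LE_def)
    qed
  qed
  then show ?thesis by (rule bij_betw_same_card)
qed

lemma LE_rec:
  assumes fin: "finite S" and ne: "S \<noteq> {}"
  shows "card (LE S R) = (\<Sum>x\<in>{x\<in>S. \<forall>y\<in>S. \<not> R y x}. card (LE (S - {x}) R))"
proof -
  define M where "M = {x\<in>S. \<forall>y\<in>S. \<not> R y x}"
  have N0: "0 < card S" using fin ne by (simp add: card_gt_0_iff)
  have eq: "LE S R = (\<Union>x\<in>M. {f \<in> LE S R. f (fst x) (snd x) = 0})"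
  proof
    show "LE S R \<subseteq> (\<Union>x\<in>M. {f \<in> LE S R. f (fst x) (snd x) = 0})"
    proof
      fix f assume f: "f \<in> LE S R"
      then have "0 \<in> case_prod f ` S" using N0 by (auto simp: LE_def bij_betw_def)
      then obtain x where x: "x \<in> S" "case_prod f x = 0" by (auto simp del: case_prod_beta')
      have "x \<in> M"
      proof -
        have "\<not> R y x" if "y \<in> S" for y
        proof
          assume "R y x"
          moreover have "\<forall>a\<in>S. \<forall>b\<in>S. R a b \<longrightarrow> case_prod f a < case_prod f b" using f by (simp add: LE_def)
          ultimately have "case_prod f y < case_prod f x" using x that by blast
          then show False using x by simp
        qed
        then show ?thesis using x by (auto simp: M_def)
      qed
      then show "f \<in> (\<Union>x\<in>M. {f \<in> LE S R. f (fst x) (snd x) = 0})"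
        using f x \<open>x \<in> M\<close> by (cases x) force
    qed
  qed auto
  have "card (LE S R) = (\<Sum>x\<in>M. card {f \<in> LE S R. f (fst x) (snd x) = 0})"
  proof (subst eq, rule card_UN_disjoint)
    show "finite M" using fin by (simp add: M_def)
    show "\<forall>x\<in>M. finite {f \<in> LE S R. f (fst x) (snd x) = 0}"
      using LE_finite[OF fin, of R] by auto
    show "\<forall>x\<in>M. \<forall>y\<in>M. x \<noteq> y \<longrightarrow> {f \<in> LE S R. f (fst x) (snd x) = 0} \<inter> {f \<in> LE S R. f (fst y) (snd y) = 0} = {}"
    proof (intro ballI impI)
      fix x y assume xy: "x \<in> M" "y \<in> M" "x \<noteq> y"
      show "{f \<in> LE S R. f (fst x) (snd x) = 0} \<inter> {f \<in> LE S R. f (fst y) (snd y) = 0} = {}"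
      proof (rule ccontr)
        assume "\<not> ?thesis"
        then obtain f where f: "f \<in> LE S R" "f (fst x) (snd x) = 0" "f (fst y) (snd y) = 0" by blast
        have "case_prod f x = case_prod f y" using f by (cases x, cases y) auto
        moreover have "inj_on (case_prod f) S" using f by (auto simp: LE_def bij_betw_def)
        ultimately have "x = y" using xy by (auto simp: M_def dest: inj_onD)
        then show False using xy by simp
      qed
    qed
  qed
  also have "\<dots> = (\<Sum>x\<in>M. card (LE (S - {x}) R))"
    by (intro sum.cong refl LE_piece[OF fin]) (auto simp: M_def)
  finally show ?thesis by (simp add: M_def)
qed

definition cells :: "nat \<Rightarrow> (nat \<Rightarrow> nat) \<Rightarrow> (nat \<times> nat) set" where
  "cells n la = {(i, j). 1 \<le> j \<and> j \<le> n \<and> 1 \<le> i \<and> i \<le> la j}"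

definition Rel :: "nat \<times> nat \<Rightarrow> nat \<times> nat \<Rightarrow> bool" where
  "Rel a b \<longleftrightarrow> (fst a = fst b + 1 \<and> snd a = snd b) \<or> (fst a = fst b \<and> snd a = snd b + 1)
     \<or> (fst a + 1 = fst b \<and> snd a = snd b + 1)"

definition strict :: "nat \<Rightarrow> (nat \<Rightarrow> nat) \<Rightarrow> bool" where
  "strict n la \<longleftrightarrow> (\<forall>j. 1 \<le> j \<longrightarrow> j < n \<longrightarrow> la (Suc j) = 0 \<or> la (Suc j) < la j)"

definition removable :: "nat \<Rightarrow> (nat \<Rightarrow> nat) \<Rightarrow> nat \<Rightarrow> bool" where
  "removable n la j \<longleftrightarrow> 1 \<le> j \<and> j \<le> n \<and> 0 < la j \<and> (j = n \<or> la (Suc j) = 0 \<or> Suc (la (Suc j)) < la j)"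

definition FF :: "nat \<Rightarrow> (nat \<Rightarrow> nat) \<Rightarrow> nat" where
  "FF n la = card (LE (cells n la) Rel)"

lemma cells_UN: "cells n la = (\<Union>j\<in>{1..n}. {1..la j} \<times> {j})"
  by (auto simp: cells_def)

lemma cells_finite: "finite (cells n la)"
  by (simp add: cells_UN)

lemma cells_card: "card (cells n la) = (\<Sum>j=1..n. la j)"
proof -
  have "card (\<Union>j\<in>{1..n}. {1..la j} \<times> {j}) = (\<Sum>j=1..n. card ({1..la j} \<times> {j}))"
    by (rule card_UN_disjoint) auto
  then show ?thesis by (simp add: cells_UN card_cartesian_product)
qed

lemma minimal_cells:
  "{x \<in> cells n la. \<forall>y\<in>cells n la. \<not> Rel y x} = (\<lambda>j. (la j, j)) ` {j. removable n la j}"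
proof
  show "{x \<in> cells n la. \<forall>y\<in>cells n la. \<not> Rel y x} \<subseteq> (\<lambda>j. (la j, j)) ` {j. removable n la j}"
  proof
    fix x assume x: "x \<in> {x \<in> cells n la. \<forall>y\<in>cells n la. \<not> Rel y x}"
    obtain i j where ij: "x = (i, j)" by (cases x)
    have c: "1 \<le> j" "j \<le> n" "1 \<le> i" "i \<le> la j" using x ij by (auto simp: cells_def)
    have m: "\<And>y. y \<in> cells n la \<Longrightarrow> \<not> Rel y (i, j)" using x ij by auto
    have "i = la j"
    proof (rule ccontr)
      assume "i \<noteq> la j"
      then have "(i + 1, j) \<in> cells n la" using c by (auto simp: cells_def)
      then show False using m[of "(i+1, j)"] by (simp add: Rel_def)
    qed
    moreover have "j = n \<or> la (Suc j) = 0 \<or> Suc (la (Suc j)) < la j"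
    proof (rule ccontr)
      assume a: "\<not> ?thesis"
      then have jn: "j < n" "la (Suc j) > 0" "la (Suc j) + 1 \<ge> i" using c \<open>i = la j\<close> by auto
      show False
      proof (cases "i = 1")
        case True
        then have "(i, j + 1) \<in> cells n la" using jn c by (auto simp: cells_def)
        then show False using m[of "(i, j+1)"] by (simp add: Rel_def)
      next
        case False
        then have "(i - 1, j + 1) \<in> cells n la" using jn c by (auto simp: cells_def)
        then show False using m[of "(i - 1, j+1)"] False c by (simp add: Rel_def)
      qed
    qed
    ultimately show "x \<in> (\<lambda>j. (la j, j)) ` {j. removable n la j}"
      using c ij by (auto simp: removable_def)
  qed
  show "(\<lambda>j. (la j, j)) ` {j. removable n la j} \<subseteq> {x \<in> cells n la. \<forall>y\<in>cells n la. \<not> Rel y x}"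
  proof
    fix x assume "x \<in> (\<lambda>j. (la j, j)) ` {j. removable n la j}"
    then obtain j where j: "removable n la j" "x = (la j, j)" by blast
    have "x \<in> cells n la" using j by (auto simp: cells_def removable_def)
    moreover have "\<not> Rel y x" if y: "y \<in> cells n la" for y
    proof
      assume r: "Rel y x"
      obtain a b where ab: "y = (a, b)" by (cases y)
      have yc: "1 \<le> b" "b \<le> n" "1 \<le> a" "a \<le> la b" using y ab by (auto simp: cells_def)
      from r j ab consider "a = la j + 1" "b = j" | "a = la j" "b = j + 1" | "a + 1 = la j" "b = j + 1"
        by (auto simp: Rel_def)
      then show False
        using yc j by cases (auto simp: removable_def)
    qed
    ultimately show "x \<in> {x \<in> cells n la. \<forall>y\<in>cells n la. \<not> Rel y x}" by blast
  qed
qed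

lemma cells_remove:
  assumes "1 \<le> j" "j \<le> n" "0 < la j"
  shows "cells n la - {(la j, j)} = cells n (la(j := la j - 1))"
  using assms by (auto simp: cells_def)

lemma FF_rec:
  assumes "0 < (\<Sum>j=1..n. la j)"
  shows "FF n la = (\<Sum>j\<in>{j. removable n la j}. FF n (la(j := la j - 1)))"
proof -
  have ne: "cells n la \<noteq> {}" using assms cells_card[of n la] by auto
  have "FF n la = (\<Sum>x\<in>(\<lambda>j. (la j, j)) ` {j. removable n la j}. card (LE (cells n la - {x}) Rel))"
    unfolding FF_def using LE_rec[OF cells_finite ne, of Rel] minimal_cells[of n la] by simp
  also have "\<dots> = (\<Sum>j\<in>{j. removable n la j}. card (LE (cells n la - {(la j, j)}) Rel))"
    by (rule sum.reindex_cong[where l = "\<lambda>j. (la j, j)"]) (auto simp: inj_on_def)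
  also have "\<dots> = (\<Sum>j\<in>{j. removable n la j}. FF n (la(j := la j - 1)))"
    by (intro sum.cong refl) (simp add: FF_def cells_remove removable_def)
  finally show ?thesis .
qed

lemma FF_zero:
  assumes "(\<Sum>j=1..n. la j) = 0"
  shows "FF n la = 1"
proof -
  have "cells n la = {}" using assms cells_card[of n la] cells_finite[of n la] by simp
  then show ?thesis by (simp add: FF_def LE_empty)
qed

definition hh :: "nat \<Rightarrow> nat \<Rightarrow> real" where
  "hh a b = (if a = 0 \<and> b = 0 then 1 else (real a - real b) / (real a + real b))"

definition Pairs :: "nat \<Rightarrow> (nat \<times> nat) set" where
  "Pairs n = (SIGMA a:{1..n}. {a<..n})"

definition GG :: "nat \<Rightarrow> (nat \<Rightarrow> nat) \<Rightarrow> real" where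
  "GG n la = fact (\<Sum>j=1..n. la j) / (\<Prod>j=1..n. fact (la j)) * (\<Prod>p\<in>Pairs n. hh (la (fst p)) (la (snd p)))"

definition rho :: "nat \<Rightarrow> nat \<Rightarrow> real" where
  "rho a b = (if b = 0 then 1 else rr (real a) (real b))"

lemma Pairs_finite: "finite (Pairs n)"
  by (simp add: Pairs_def)

lemma strict_less:
  assumes st: "strict n la" and j1: "1 \<le> j"
  shows "j < k \<Longrightarrow> k \<le> n \<Longrightarrow> 0 < la k \<Longrightarrow> la k < la j"
proof (induction k)
  case 0 then show ?case by simp
next
  case (Suc k)
  have kb: "1 \<le> k" "k < n" using Suc.prems j1 by linarith+
  have s: "la (Suc k) = 0 \<or> la (Suc k) < la k" using st kb unfolding strict_def by blast
  have s2: "la (Suc k) < la k" using s Suc.prems(3) by linarith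
  show ?case
  proof (cases "j = k")
    case True then show ?thesis using s2 by simp
  next
    case False
    have "j < k" using False Suc.prems(1) by linarith
    moreover have "k \<le> n" using kb by linarith
    moreover have "0 < la k" using s2 by linarith
    ultimately have "la k < la j" by (rule Suc.IH)
    then show ?thesis using s2 by linarith
  qed
qed

lemma r1:
  fixes a b :: real
  assumes "a - 1 + b \<noteq> 0" "a - b \<noteq> 0" "a + b \<noteq> 0"
  shows "(a - 1 - b) / (a - 1 + b) = (a - b) / (a + b) * rr a b"
proof -
  have "(a - b) / (a + b) * rr a b = ((a - b) * ((a - 1 - b) * (a + b))) / ((a + b) * ((a - 1 + b) * (a - b)))"
    by (simp add: rr_def)
  also have "\<dots> = ((a - 1 - b) * ((a - b) * (a + b))) / ((a - 1 + b) * ((a - b) * (a + b)))"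
    by (rule arg_cong2[where f="(/)"]) (simp_all only: ac_simps)
  also have "\<dots> = (a - 1 - b) / (a - 1 + b)"
    using assms by (simp add: mult_divide_mult_cancel_right)
  finally show ?thesis by simp
qed

lemma r2:
  fixes a b :: real
  assumes "a - 1 + b \<noteq> 0" "a - b \<noteq> 0" "a + b \<noteq> 0"
  shows "(b - (a - 1)) / (b + (a - 1)) = (b - a) / (b + a) * rr a b"
proof -
  have "(b - a) / (b + a) = - ((a - b) / (a + b))"
    by (simp add: add.commute minus_divide_left)
  then have "(b - a) / (b + a) * rr a b = - ((a - b) / (a + b) * rr a b)"
    by simp
  also have "\<dots> = - ((a - 1 - b) / (a - 1 + b))" using r1[OF assms] by simp
  also have "\<dots> = (b - (a - 1)) / (b + (a - 1))"
    by (simp add: minus_divide_left add.commute)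
  finally show ?thesis by simp
qed

lemma id1:
  assumes "0 < A" "A \<noteq> B"
  shows "hh (A - 1) B = hh A B * rho A B"
proof (cases "B = 0")
  case True then show ?thesis using assms by (simp add: hh_def rho_def)
next
  case False
  have d1: "real A - 1 + real B \<noteq> 0" using assms False by linarith
  have d2: "real A - real B \<noteq> 0" using assms by simp
  have d3: "real A + real B \<noteq> 0" using assms by simp
  have "hh (A - 1) B = (real A - 1 - real B) / (real A - 1 + real B)"
    using False assms by (simp add: hh_def of_nat_diff)
  then show ?thesis using False assms r1[OF d1 d2 d3] by (simp add: hh_def rho_def)
qed

lemma id2:
  assumes "0 < A" "0 < B" "A \<noteq> B"
  shows "hh B (A - 1) = hh B A * rho A B"
proof -
  have d1: "real A - 1 + real B \<noteq> 0" using assms by linarith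
  have d2: "real A - real B \<noteq> 0" using assms by simp
  have d3: "real A + real B \<noteq> 0" using assms by simp
  have d4: "real B + (real A - 1) \<noteq> 0" using assms by linarith
  have "hh B (A - 1) = (real B - (real A - 1)) / (real B + (real A - 1))"
    using assms by (simp add: hh_def of_nat_diff)
  then show ?thesis using assms r2[OF d1 d2 d3] by (simp add: hh_def rho_def)
qed

lemma H_step:
  assumes st: "strict n la" and j: "1 \<le> j" "j \<le> n" and pos: "0 < la j"
  shows "(\<Prod>p\<in>Pairs n. hh ((la(j := la j - 1)) (fst p)) ((la(j := la j - 1)) (snd p)))
       = (\<Prod>p\<in>Pairs n. hh (la (fst p)) (la (snd p))) * (\<Prod>k\<in>{1..n}-{j}. rho (la j) (la k))"
proof -
  define la' where "la' = la(j := la j - 1)"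
  define \<psi> where "\<psi> p = (if fst p = j then rho (la j) (la (snd p)) else if snd p = j then rho (la j) (la (fst p)) else 1)" for p
  have pw: "hh (la' (fst p)) (la' (snd p)) = hh (la (fst p)) (la (snd p)) * \<psi> p" if p: "p \<in> Pairs n" for p
  proof -
    obtain a b where ab: "p = (a, b)" "1 \<le> a" "a < b" "b \<le> n" using p by (auto simp: Pairs_def)
    show ?thesis
    proof (cases "a = j")
      case True
      have "la b \<noteq> la j" using strict_less[OF st j(1), of b] ab True pos by (cases "la b = 0") auto
      then show ?thesis using True ab id1[OF pos, of "la b"] by (simp add: la'_def \<psi>_def)
    next
      case False
      show ?thesis
      proof (cases "b = j")
        case True
        have "la j < la a" using strict_less[OF st ab(2), of j] ab True pos by auto
        then show ?thesis using True False ab id2[OF pos, of "la a"] by (simp add: la'_def \<psi>_def)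
      next
        case False2: False
        then show ?thesis using False ab by (simp add: la'_def \<psi>_def)
      qed
    qed
  qed
  have "(\<Prod>p\<in>Pairs n. hh (la' (fst p)) (la' (snd p))) = (\<Prod>p\<in>Pairs n. hh (la (fst p)) (la (snd p)) * \<psi> p)"
    by (rule prod.cong[OF refl pw])
  also have "\<dots> = (\<Prod>p\<in>Pairs n. hh (la (fst p)) (la (snd p))) * (\<Prod>p\<in>Pairs n. \<psi> p)"
    by (rule prod.distrib)
  also have "(\<Prod>p\<in>Pairs n. \<psi> p) = (\<Prod>p\<in>Pairs n \<inter> {p. fst p = j \<or> snd p = j}. \<psi> p)"
    by (rule prod.mono_neutral_right) (auto simp: Pairs_finite \<psi>_def)
  also have "\<dots> = (\<Prod>k\<in>{1..n}-{j}. rho (la j) (la k))"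
  proof -
    define g where "g k = (if j < k then (j, k) else (k, j))" for k
    have "bij_betw g ({1..n}-{j}) (Pairs n \<inter> {p. fst p = j \<or> snd p = j})"
    proof (rule bij_betw_byWitness[where f' = "\<lambda>p. if fst p = j then snd p else fst p"])
      show "g ` ({1..n} - {j}) \<subseteq> Pairs n \<inter> {p. fst p = j \<or> snd p = j}"
        using j by (auto simp: g_def Pairs_def)
      show "(\<lambda>p. if fst p = j then snd p else fst p) ` (Pairs n \<inter> {p. fst p = j \<or> snd p = j}) \<subseteq> {1..n} - {j}"
        using j by (auto simp: Pairs_def)
    qed (auto simp: g_def Pairs_def)
    then have "(\<Prod>p\<in>Pairs n \<inter> {p. fst p = j \<or> snd p = j}. \<psi> p) = (\<Prod>k\<in>{1..n}-{j}. \<psi> (g k))"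
      by (rule prod.reindex_bij_betw[symmetric])
    also have "\<dots> = (\<Prod>k\<in>{1..n}-{j}. rho (la j) (la k))"
      by (intro prod.cong refl) (auto simp: g_def \<psi>_def)
    finally show ?thesis .
  qed
  finally show ?thesis by (simp add: la'_def)
qed

lemma GG_step:
  assumes st: "strict n la" and j: "1 \<le> j" "j \<le> n" and pos: "0 < la j"
  shows "GG n (la(j := la j - 1)) = GG n la * (real (la j) / real (\<Sum>i=1..n. la i)) * (\<Prod>k\<in>{1..n}-{j}. rho (la j) (la k))"
proof -
  define la' where "la' = la(j := la j - 1)"
  define N where "N = (\<Sum>i=1..n. la i)"
  define Rs where "Rs = (\<Sum>i\<in>{1..n}-{j}. la i)"
  define Rp where "Rp = (\<Prod>i\<in>{1..n}-{j}. (fact (la i) :: real))"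
  define H where "H = (\<Prod>p\<in>Pairs n. hh (la (fst p)) (la (snd p)))"
  define Q where "Q = (\<Prod>k\<in>{1..n}-{j}. rho (la j) (la k))"
  have jin: "j \<in> {1..n}" using j by simp
  have N: "N = la j + Rs" unfolding N_def Rs_def using jin by (simp add: sum.remove)
  have N': "(\<Sum>i=1..n. la' i) = la j - 1 + Rs" unfolding Rs_def using jin
    by (simp add: sum.remove la'_def)
  have P: "(\<Prod>i=1..n. (fact (la i) :: real)) = fact (la j) * Rp" unfolding Rp_def using jin
    by (simp add: prod.remove)
  have P': "(\<Prod>i=1..n. (fact (la' i) :: real)) = fact (la j - 1) * Rp" unfolding Rp_def using jin
    by (simp add: prod.remove la'_def)
  have H': "(\<Prod>p\<in>Pairs n. hh (la' (fst p)) (la' (snd p))) = H * Q"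
    unfolding H_def Q_def la'_def by (rule H_step[OF st j pos])
  have fj: "(fact (la j) :: real) = real (la j) * fact (la j - 1)" using pos by (simp add: fact_reduce)
  have fN: "(fact N :: real) = real N * fact (la j - 1 + Rs)" using pos N
    by (simp add: fact_reduce)
  have Rp0: "Rp \<noteq> 0" unfolding Rp_def by simp
  have f0: "(fact (la j - 1) :: real) \<noteq> 0" by simp
  have GG': "GG n la' = fact (la j - 1 + Rs) / (fact (la j - 1) * Rp) * (H * Q)"
    unfolding GG_def N' P' H' by simp
  have GGl: "GG n la = real N * fact (la j - 1 + Rs) / (real (la j) * fact (la j - 1) * Rp) * H"
    unfolding GG_def N_def[symmetric] P fN fj H_def by simp
  have Npos: "real N \<noteq> 0" using N pos by simp
  have lpos: "real (la j) \<noteq> 0" using pos by simp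
  show ?thesis
    unfolding la'_def[symmetric] N_def[symmetric] Q_def[symmetric] GG' GGl
    using Npos lpos Rp0 f0 by (simp add: field_simps)
qed

lemma GG_rec:
  assumes st: "strict n la" and Npos: "0 < (\<Sum>i=1..n. la i)"
  shows "GG n la = (\<Sum>j\<in>{j\<in>{1..n}. 0 < la j}. GG n (la(j := la j - 1)))"
proof -
  define P where "P = {j\<in>{1..n}. 0 < la j}"
  define N where "N = (\<Sum>i=1..n. la i)"
  define x where "x k = real (la k)" for k
  have finP: "finite P" by (simp add: P_def)
  have Q: "(\<Prod>k\<in>{1..n}-{j}. rho (la j) (la k)) = (\<Prod>k\<in>P-{j}. rr (x j) (x k))" if "j \<in> P" for j
  proof -
    have "(\<Prod>k\<in>{1..n}-{j}. rho (la j) (la k)) = (\<Prod>k\<in>P-{j}. rho (la j) (la k))"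
      by (rule prod.mono_neutral_right) (auto simp: P_def rho_def)
    also have "\<dots> = (\<Prod>k\<in>P-{j}. rr (x j) (x k))"
      by (intro prod.cong refl) (auto simp: P_def rho_def x_def)
    finally show ?thesis .
  qed
  have inj: "inj_on x P"
  proof (rule inj_onI)
    fix a b assume ab: "a \<in> P" "b \<in> P" "x a = x b"
    show "a = b"
    proof (rule ccontr)
      assume "a \<noteq> b"
      then consider "a < b" | "b < a" by linarith
      then show False
      proof cases
        case 1 then show False using strict_less[OF st, of a b] ab by (auto simp: P_def x_def)
      next
        case 2 then show False using strict_less[OF st, of b a] ab by (auto simp: P_def x_def)
      qed
    qed
  qed
  have ge: "x k \<ge> 1" if "k \<in> P" for k using that by (auto simp: P_def x_def)
  have "(\<Sum>j\<in>P. GG n (la(j := la j - 1))) = (\<Sum>j\<in>P. GG n la / real N * (x j * (\<Prod>k\<in>P-{j}. rr (x j) (x k))))"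
  proof (intro sum.cong refl)
    fix j assume j: "j \<in> P"
    have "GG n (la(j := la j - 1)) = GG n la * (real (la j) / real N) * (\<Prod>k\<in>{1..n}-{j}. rho (la j) (la k))"
      using GG_step[OF st, of j] j by (auto simp: P_def N_def)
    then show "GG n (la(j := la j - 1)) = GG n la / real N * (x j * (\<Prod>k\<in>P-{j}. rr (x j) (x k)))"
      using Q[OF j] by (simp add: x_def)
  qed
  also have "\<dots> = GG n la / real N * (\<Sum>j\<in>P. x j * (\<Prod>k\<in>P-{j}. rr (x j) (x k)))"
    by (simp add: sum_distrib_left)
  also have "\<dots> = GG n la / real N * (\<Sum>j\<in>P. x j)"
    using ident[OF finP ge inj] by simp
  also have "(\<Sum>j\<in>P. x j) = real N"
  proof -
    have "(\<Sum>j\<in>P. x j) = (\<Sum>j\<in>{1..n}. x j)"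
      by (rule sum.mono_neutral_left) (auto simp: P_def x_def)
    then show ?thesis by (simp add: x_def N_def)
  qed
  also have "GG n la / real N * real N = GG n la" using Npos unfolding N_def[symmetric] by simp
  finally show ?thesis unfolding P_def by (rule sym)
qed

lemma GG_nonrem:
  assumes st: "strict n la" and j: "1 \<le> j" "j \<le> n" and pos: "0 < la j" and nr: "\<not> removable n la j"
  shows "GG n (la(j := la j - 1)) = 0"
proof -
  have jn: "j < n" "la (Suc j) \<noteq> 0" "la j \<le> Suc (la (Suc j))" using nr j pos by (auto simp: removable_def)
  have "la (Suc j) = 0 \<or> la (Suc j) < la j"
    using st unfolding strict_def using j(1) jn(1) by simp
  then have "la (Suc j) < la j" using jn(2) by simp
  then have eq: "la (Suc j) = la j - 1" using jn by linarith
  have rr0: "rr u (u - 1) = 0" for u by (simp add: rr_def)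
  have "real (la (Suc j)) = real (la j) - 1" using eq pos by (simp add: of_nat_diff)
  then have r0: "rho (la j) (la (Suc j)) = 0" using jn(2) rr0[of "real (la j)"] unfolding rho_def by simp
  have mem: "Suc j \<in> {1..n}-{j}" using jn(1) by simp
  have "(\<Prod>k\<in>{1..n}-{j}. rho (la j) (la k)) = 0"
    by (rule prod_zero) (use mem r0 in blast)+
  then show ?thesis using GG_step[OF st j pos] by simp
qed

lemma GG_empty:
  assumes "(\<Sum>i=1..n. la i) = 0"
  shows "GG n la = 1"
proof -
  have z: "\<And>i. i \<in> {1..n} \<Longrightarrow> la i = 0" using assms by simp
  have "(\<Prod>p\<in>Pairs n. hh (la (fst p)) (la (snd p))) = 1"
    by (rule prod.neutral) (auto simp: Pairs_def z hh_def)
  moreover have "(\<Prod>i=1..n. (fact (la i) :: real)) = 1"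
    by (rule prod.neutral) (simp add: z)
  ultimately show ?thesis using assms by (simp add: GG_def)
qed

lemma strict_remove:
  assumes st: "strict n la" and r: "removable n la j"
  shows "strict n (la(j := la j - 1))"
  unfolding strict_def
proof (intro allI impI)
  fix i assume i: "1 \<le> i" "i < n"
  have s: "la (Suc i) = 0 \<or> la (Suc i) < la i" using st unfolding strict_def using i by simp
  show "(la(j := la j - 1)) (Suc i) = 0 \<or> (la(j := la j - 1)) (Suc i) < (la(j := la j - 1)) i"
  proof (cases "Suc i = j")
    case True
    then show ?thesis using s r by (auto simp: removable_def)
  next
    case False
    show ?thesis
    proof (cases "i = j")
      case True
      then show ?thesis using s r i False by (auto simp: removable_def)
    next
      case False2: False
      then show ?thesis using s False by simp
    qed
  qed
qed

lemma FF_GG: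
  assumes "strict n la"
  shows "real (FF n la) = GG n la"
  using assms
proof (induction "\<Sum>i=1..n. la i" arbitrary: la rule: less_induct)
  case less
  show ?case
  proof (cases "(\<Sum>i=1..n. la i) = 0")
    case True then show ?thesis by (simp add: FF_zero GG_empty)
  next
    case False
    then have Np: "0 < (\<Sum>i=1..n. la i)" by (simp only: gr0I)
    have "real (FF n la) = (\<Sum>j\<in>{j. removable n la j}. real (FF n (la(j := la j - 1))))"
      by (simp add: FF_rec[OF Np])
    also have "\<dots> = (\<Sum>j\<in>{j. removable n la j}. GG n (la(j := la j - 1)))"
    proof (intro sum.cong refl)
      fix j assume j: "j \<in> {j. removable n la j}"
      then have jj: "1 \<le> j" "j \<le> n" "0 < la j" by (auto simp: removable_def)
      have "(\<Sum>i=1..n. (la(j := la j - 1)) i) < (\<Sum>i=1..n. la i)"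
      proof -
        have "(\<Sum>i=1..n. (la(j := la j - 1)) i) = la j - 1 + (\<Sum>i\<in>{1..n}-{j}. la i)"
          using jj by (simp add: sum.remove)
        moreover have "(\<Sum>i=1..n. la i) = la j + (\<Sum>i\<in>{1..n}-{j}. la i)"
          using jj by (simp add: sum.remove)
        ultimately show ?thesis using jj by linarith
      qed
      then show "real (FF n (la(j := la j - 1))) = GG n (la(j := la j - 1))"
        using less.hyps strict_remove[OF less.prems] j by blast
    qed
    also have "\<dots> = (\<Sum>j\<in>{j\<in>{1..n}. 0 < la j}. GG n (la(j := la j - 1)))"
    proof (rule sum.mono_neutral_left)
      show "{j. removable n la j} \<subseteq> {j \<in> {1..n}. 0 < la j}" by (auto simp: removable_def)
      show "\<forall>i\<in>{j \<in> {1..n}. 0 < la j} - {j. removable n la j}. GG n (la(i := la i - 1)) = 0"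
        using GG_nonrem[OF less.prems] by auto
    qed simp
    also have "\<dots> = GG n la" using GG_rec[OF less.prems Np] by simp
    finally show ?thesis .
  qed
qed

lemma cells_st: "cells n (\<lambda>j. n + 1 - j) = {(i, j). stair_cell n i j}"
  by (auto simp: cells_def stair_cell_def)

lemma sum_st: "(\<Sum>j=1..n. n + 1 - j) = (n + 1) choose 2"
proof -
  have "(\<Sum>j=1..n. n + 1 - j) = (\<Sum>j=1..n. j)"
    using sum.atLeastAtMost_rev[of "\<lambda>j. j" 1 n] by (simp add: add.commute)
  also have "\<dots> = (\<Sum>j=0..n. j)" by (simp add: sum.atLeast_Suc_atMost)
  also have "\<dots> = n * Suc n div 2" using gauss_sum_nat[of n] by simp
  also have "\<dots> = (n + 1) choose 2" by (simp add: choose_two mult.commute)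
  finally show ?thesis .
qed

lemma card_st: "card {(i, j). stair_cell n i j} = (n + 1) choose 2"
  using cells_card[of n "\<lambda>j. n + 1 - j"] cells_st[of n] sum_st[of n] by simp

lemma vpp_iff:
  assumes inj: "inj_on (case_prod \<pi>) {(i, j). stair_cell n i j}"
  shows "stair_vertex_pp n \<pi> \<longleftrightarrow>
    (\<forall>x\<in>{(i, j). stair_cell n i j}. \<forall>y\<in>{(i, j). stair_cell n i j}. Rel x y \<longrightarrow> case_prod \<pi> x < case_prod \<pi> y)"
    (is "?L \<longleftrightarrow> ?R")
proof
  have ne: "\<pi> a b \<noteq> \<pi> c d" if "stair_cell n a b" "stair_cell n c d" "(a, b) \<noteq> (c, d)" for a b c d
  proof
    assume "\<pi> a b = \<pi> c d"
    then have "case_prod \<pi> (a, b) = case_prod \<pi> (c, d)" by simp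
    then have "(a, b) = (c, d)" using inj_onD[OF inj, of "(a, b)" "(c, d)"] that by simp
    then show False using that by simp
  qed
  {
    assume L: ?L
    show ?R
    proof (intro ballI impI)
      fix x y assume xy: "x \<in> {(i, j). stair_cell n i j}" "y \<in> {(i, j). stair_cell n i j}" "Rel x y"
      obtain a b c d where ab: "x = (a, b)" "y = (c, d)" by (cases x, cases y)
      have cx: "stair_cell n a b" "stair_cell n c d" using xy ab by auto
      from xy(3) ab consider "a = c + 1" "b = d" | "a = c" "b = d + 1" | "a + 1 = c" "b = d + 1"
        by (auto simp: Rel_def)
      then show "case_prod \<pi> x < case_prod \<pi> y"
      proof cases
        case 1
        have "\<pi> (c + 1) d \<le> \<pi> c d" using L cx 1 by (auto simp: stair_vertex_pp_def stair_plane_partition_def)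
        moreover have "\<pi> a b \<noteq> \<pi> c d" using ne[OF cx] 1 by simp
        ultimately show ?thesis using ab 1 by simp
      next
        case 2
        have "\<pi> c (d + 1) \<le> \<pi> c d" using L cx 2 by (auto simp: stair_vertex_pp_def stair_plane_partition_def)
        moreover have "\<pi> a b \<noteq> \<pi> c d" using ne[OF cx] 2 by simp
        ultimately show ?thesis using ab 2 by simp
      next
        case 3
        have d1: "1 \<le> d" "d \<le> n - 1" "1 \<le> a" "a \<le> n - d" using cx 3 by (auto simp: stair_cell_def)
        have "\<forall>i. 1 \<le> i \<and> i \<le> n - d \<longrightarrow> \<pi> i (d + 1) < \<pi> (i + 1) d \<or> \<pi> i (d + 1) = \<pi> i d"
          using L d1 unfolding stair_vertex_pp_def by blast
        then have "\<pi> a (d + 1) < \<pi> (a + 1) d \<or> \<pi> a (d + 1) = \<pi> a d" using d1 by blast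
        moreover have "\<pi> a (d + 1) \<noteq> \<pi> a d"
          using ne[of a "d+1" a d] cx 3 by (auto simp: stair_cell_def)
        ultimately show ?thesis using ab 3 by simp
      qed
    qed
  }
  {
    assume R: ?R
    have Rr: "\<pi> a b < \<pi> c d" if "stair_cell n a b" "stair_cell n c d" "Rel (a, b) (c, d)" for a b c d
      using R that by fastforce
    show ?L
      unfolding stair_vertex_pp_def stair_plane_partition_def
    proof (intro conjI allI impI)
      fix i j assume "stair_cell n i j \<and> stair_cell n i (j + 1)"
      then show "\<pi> i (j + 1) \<le> \<pi> i j" using Rr[of i "j+1" i j] by (simp add: Rel_def)
    next
      fix i j assume "stair_cell n i j \<and> stair_cell n (i + 1) j"
      then show "\<pi> (i + 1) j \<le> \<pi> i j" using Rr[of "i+1" j i j] by (simp add: Rel_def)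
    next
      fix j i assume "1 \<le> j \<and> j \<le> n - 1" "2 \<le> i \<and> i \<le> n - j \<and> \<pi> i j = \<pi> i (j + 1)"
      then have A: "i + j \<le> n" "\<pi> i j = \<pi> i (j + 1)" "2 \<le> i" "1 \<le> j" by arith+
      then have "\<pi> i (j + 1) < \<pi> i j" using Rr[of i "j+1" i j] by (simp add: Rel_def stair_cell_def)
      then show "\<pi> (i - 1) j = \<pi> (i - 1) (j + 1)" using A by simp
    next
      fix j i assume "1 \<le> j \<and> j \<le> n - 1" "1 \<le> i \<and> i \<le> n - j"
      then show "\<pi> i (j + 1) < \<pi> (i + 1) j \<or> \<pi> i (j + 1) = \<pi> i j"
        using Rr[of i "j+1" "i+1" j] by (auto simp: Rel_def stair_cell_def)
    qed
  }
qed

lemma p_stair_FF: "p_stair n = FF n (\<lambda>j. n + 1 - j)"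
proof -
  let ?C = "{(i, j). stair_cell n i j}"
  have "{\<pi>. (\<forall>i j. \<not> stair_cell n i j \<longrightarrow> \<pi> i j = 0) \<and> stair_vertex_pp n \<pi> \<and>
       bij_betw (\<lambda>(i, j). \<pi> i j) ?C {0..<(n + 1) choose 2}} = LE ?C Rel"
    unfolding LE_def
  proof (rule Collect_cong)
    fix \<pi> :: "nat \<Rightarrow> nat \<Rightarrow> nat"
    show "((\<forall>i j. \<not> stair_cell n i j \<longrightarrow> \<pi> i j = 0) \<and> stair_vertex_pp n \<pi> \<and>
       bij_betw (\<lambda>(i, j). \<pi> i j) ?C {0..<(n + 1) choose 2}) =
      ((\<forall>i j. (i, j) \<notin> ?C \<longrightarrow> \<pi> i j = 0) \<and>
      (\<forall>x\<in>?C. \<forall>y\<in>?C. Rel x y \<longrightarrow> case_prod \<pi> x < case_prod \<pi> y) \<and>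
      bij_betw (case_prod \<pi>) ?C {0..<card ?C})"
      using vpp_iff[of \<pi> n] card_st[of n] by (auto simp: bij_betw_def)
  qed
  then show ?thesis unfolding p_stair_def FF_def cells_st LE_def by simp
qed

lemma strict_st: "strict n (\<lambda>j. n + 1 - j)"
  by (auto simp: strict_def)

lemma prod_fact_st: "(\<Prod>j=1..n. (fact (n + 1 - j) :: real)) = (\<Prod>k=1..n. fact k)"
  using prod.atLeastAtMost_rev[of "\<lambda>k. (fact k :: real)" 1 n] by (simp add: add.commute)

lemma H_st:
  "(\<Prod>p\<in>Pairs n. hh ((\<lambda>j. n + 1 - j) (fst p)) ((\<lambda>j. n + 1 - j) (snd p)))
     = (\<Prod>u=1..n. \<Prod>v\<in>{1..<u}. (real u - real v) / (real u + real v))"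
proof -
  define g where "g p = (n + 1 - fst p, n + 1 - snd p)" for p :: "nat \<times> nat"
  define \<phi> where "\<phi> q = (real (fst q) - real (snd q)) / (real (fst q) + real (snd q))" for q :: "nat \<times> nat"
  have bij: "bij_betw g (Pairs n) (SIGMA u:{1..n}. {1..<u})"
  proof (rule bij_betw_byWitness[where f' = g])
    show "\<forall>a\<in>Pairs n. g (g a) = a" by (auto simp: g_def Pairs_def)
    show "\<forall>a'\<in>(SIGMA u:{1..n}. {1..<u}). g (g a') = a'" by (auto simp: g_def)
    show "g ` Pairs n \<subseteq> (SIGMA u:{1..n}. {1..<u})" by (auto simp: g_def Pairs_def)
    show "g ` (SIGMA u:{1..n}. {1..<u}) \<subseteq> Pairs n" by (auto simp: g_def Pairs_def)
  qed
  have "(\<Prod>u=1..n. \<Prod>v\<in>{1..<u}. (real u - real v) / (real u + real v)) = (\<Prod>q\<in>(SIGMA u:{1..n}. {1..<u}). \<phi> q)"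
    by (simp add: prod.Sigma \<phi>_def split_def)
  also have "\<dots> = (\<Prod>p\<in>Pairs n. \<phi> (g p))"
    by (rule prod.reindex_bij_betw[OF bij, symmetric])
  also have "\<dots> = (\<Prod>p\<in>Pairs n. hh ((\<lambda>j. n + 1 - j) (fst p)) ((\<lambda>j. n + 1 - j) (snd p)))"
  proof (intro prod.cong refl)
    fix p assume p: "p \<in> Pairs n"
    then have "fst p \<le> n" "snd p \<le> n" by (auto simp: Pairs_def)
    then show "\<phi> (g p) = hh ((\<lambda>j. n + 1 - j) (fst p)) ((\<lambda>j. n + 1 - j) (snd p))"
      by (simp add: \<phi>_def g_def hh_def)
  qed
  finally show ?thesis by simp
qed

lemma prod_nat_fact: "(\<Prod>v\<in>{1..<u}. real v) = fact (u - 1)"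
proof (induction u)
  case 0 then show ?case by simp
next
  case (Suc u)
  show ?case
  proof (cases "u = 0")
    case True then show ?thesis by simp
  next
    case False
    then have "(\<Prod>v\<in>{1..<Suc u}. real v) = (\<Prod>v\<in>{1..<u}. real v) * real u"
      by (simp add: prod.atLeastLessThan_Suc)
    also have "\<dots> = fact (u - 1) * real u" using Suc.IH by simp
    also have "\<dots> = fact u" using False by (metis fact_reduce mult.commute neq0_conv)
    finally show ?thesis by simp
  qed
qed

lemma prod_rev_fact: "(\<Prod>v\<in>{1..<u}. real u - real v) = fact (u - 1)"
proof -
  have "(\<Prod>v\<in>{1..<u}. real u - real v) = (\<Prod>v\<in>{1..<u}. real v)"
    by (rule prod.reindex_bij_witness[where i = "\<lambda>v. u - v" and j = "\<lambda>v. u - v"]) (auto simp: of_nat_diff)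
  then show ?thesis using prod_nat_fact by simp
qed

lemma prod_shift_fact: "(\<Prod>v\<in>{1..<Suc k}. real m + real v) * fact m = (fact (m + k) :: real)"
proof (induction k)
  case 0 then show ?case by simp
next
  case (Suc k)
  have e: "(\<Prod>v\<in>{1..<Suc (Suc k)}. real m + real v) = (\<Prod>v\<in>{1..<Suc k}. real m + real v) * (real m + real (Suc k))"
    by (rule prod.atLeastLessThan_Suc) simp
  have "(\<Prod>v\<in>{1..<Suc (Suc k)}. real m + real v) * fact m
      = ((\<Prod>v\<in>{1..<Suc k}. real m + real v) * fact m) * (real m + real (Suc k))"
    unfolding e by (simp only: mult.assoc mult.commute mult.left_commute)
  also have "\<dots> = fact (m + k) * (real m + real (Suc k))" unfolding Suc.IH ..
  also have "\<dots> = fact (Suc (m + k))" unfolding fact_Suc by simp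
  finally show ?case by simp
qed

lemma T_u:
  assumes "1 \<le> u"
  shows "(\<Prod>v\<in>{1..<u}. (real u - real v) / (real u + real v)) = fact (u - 1) * fact u / fact (2 * u - 1)"
proof -
  obtain k where k: "u = Suc k" using assms by (cases u) auto
  have uk: "2 * u - 1 = u + k" using k by simp
  have B: "(\<Prod>v\<in>{1..<u}. real u + real v) * fact u = fact (2 * u - 1)"
    unfolding uk using prod_shift_fact[of u k] unfolding k[symmetric] .
  have A: "(\<Prod>v\<in>{1..<u}. real u + real v) = fact (2 * u - 1) / fact u"
    unfolding B[symmetric] by simp
  show ?thesis
    unfolding prod_dividef prod_rev_fact A by simp
qed

lemma prod_fact_pred: "(\<Prod>u=1..n. (fact (u - 1) :: real)) = (\<Prod>k=1..n-1. fact k)"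
proof (induction n)
  case 0 then show ?case by simp
next
  case (Suc n)
  show ?case
  proof (cases "n = 0")
    case True then show ?thesis by simp
  next
    case False
    have "(\<Prod>u=1..Suc n. (fact (u - 1) :: real)) = (\<Prod>u=1..n. (fact (u - 1) :: real)) * fact n"
      by simp
    also have "\<dots> = (\<Prod>k=1..n-1. fact k) * fact n" using Suc.IH by simp
    also have "\<dots> = (\<Prod>k=1..n. fact k)"
    proof -
      obtain n' where n': "n = Suc n'" using False by (cases n) auto
      show ?thesis unfolding n' by (simp add: prod.nat_ivl_Suc' mult.commute)
    qed
    finally show ?thesis by simp
  qed
qed

lemma alg: "(P :: real) \<noteq> 0 \<Longrightarrow> x / P * (B * P / D) = x * B / D"
  by (simp add: field_simps)

theorem corollary5p41:
  fixes n :: nat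
  assumes "n \<ge> 1"
  shows "real (p_stair n) =
    real (fact ((n + 1) choose 2) * (\<Prod>k=1..n-1. fact k)) / real (\<Prod>k=1..n. fact (2 * k - 1))"
proof -
  define N where "N = (n + 1) choose 2"
  have "real (p_stair n) = GG n (\<lambda>j. n + 1 - j)"
    using FF_GG[OF strict_st] p_stair_FF by simp
  also have "\<dots> = fact N / (\<Prod>k=1..n. fact k) * (\<Prod>u=1..n. \<Prod>v\<in>{1..<u}. (real u - real v) / (real u + real v))"
    unfolding GG_def sum_st prod_fact_st H_st N_def ..
  also have "(\<Prod>u=1..n. \<Prod>v\<in>{1..<u}. (real u - real v) / (real u + real v)) = (\<Prod>u=1..n. fact (u - 1) * fact u / fact (2 * u - 1))"
    by (rule prod.cong[OF refl], rule T_u) simp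
  also have "(\<Prod>u=1..n. fact (u - 1) * fact u / fact (2 * u - 1)) = (\<Prod>k=1..n-1. fact k) * (\<Prod>k=1..n. fact k) / (\<Prod>k=1..n. (fact (2 * k - 1) :: real))"
    unfolding prod_dividef prod.distrib prod_fact_pred ..
  also have "fact N / (\<Prod>k=1..n. fact k) * ((\<Prod>k=1..n-1. fact k) * (\<Prod>k=1..n. fact k) / (\<Prod>k=1..n. (fact (2 * k - 1) :: real)))
     = fact N * (\<Prod>k=1..n-1. fact k) / (\<Prod>k=1..n. (fact (2 * k - 1) :: real))"
    by (rule alg) simp
  finally show ?thesis by (simp add: N_def)
qed

end
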